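(* Let $0<\alpha\le\beta\le\pi$ and $f:S_\alpha\to S_\beta$, $f(z)=z^{\beta/\alpha}$. Then for all $x,y\in S_\alpha$, $$w_{S_\alpha}(x,y)\le w_{S_\beta}(f(x),f(y))\le\frac{\beta\sin(\alpha/2)}{\alpha\sin(\beta/2)}\,w_{S_\alpha}(x,y),$$ and the constants are sharp.
   Context: For $\theta\in(0,2\pi)$, $S_\theta=\{z\in\mathbb{C}:0<\arg z<\theta\}$ is the open sector; $z^{\beta/\alpha}$ uses the branch with $\arg z\in(0,\alpha)$. For a domain $G$ and $x\in G$, $d_G(x)=\inf\{|x-z|:z\in\partial G\}$; $S^1(x,r)$ is the circle of center $x$ and radius $r$. For convex $G$, $w_G(x,y)=\frac{|x-y|}{\min\{\inf_{\tilde y\in\tilde Y}|x-\tilde y|,\ \inf_{\tilde x\in\tilde X}|y-\tilde x|\}}$ with $\tilde X=\{\tilde x\in S^{1}(x,2d_G(x)):(x+\tilde x)/2\in\partial G\}$ and $\tilde Y=\{\tilde y\in S^{1}(y,2d_G(y)):(y+\tilde y)/2\in\partial G\}$. *)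

theory Defs
  imports "HOL-Analysis.Analysis"
begin

definition sector :: "real \<Rightarrow> complex set" where
  "sector \<theta> = {z. z \<noteq> 0 \<and> (\<exists>t. 0 < t \<and> t < \<theta> \<and> z = complex_of_real (cmod z) * cis t)}"

definition bdist :: "complex set \<Rightarrow> complex \<Rightarrow> real" where
  "bdist G x = infdist x (frontier G)"

definition reflpts :: "complex set \<Rightarrow> complex \<Rightarrow> complex set" where
  "reflpts G x = {x'. x' \<in> sphere x (2 * bdist G x) \<and> (x + x') / 2 \<in> frontier G}"

definition w_metric :: "complex set \<Rightarrow> complex \<Rightarrow> complex \<Rightarrow> real" where
  "w_metric G x y = dist x y /
     min (INF y'\<in>reflpts G y. dist x y') (INF x'\<in>reflpts G x. dist y x')"

text \<open>The power map z \<mapsto> z^(beta/alpha); for alpha \<le> pi the branch with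
  arg z in (0, alpha) agrees with the principal branch.\<close>
definition powmap :: "real \<Rightarrow> real \<Rightarrow> complex \<Rightarrow> complex" where
  "powmap \<alpha> \<beta> z = z powr complex_of_real (\<beta> / \<alpha>)"

end

theory Submission
  imports Defs
begin


lemma divle: fixes a b x y :: real assumes "0<a" "0<b" "x/a \<le> y/b" shows "x*b \<le> y*a"
  using assms by (simp add: field_simps)

lemma kmono: fixes k u :: real assumes "k \<ge> 1" "0 \<le> u" shows "u \<le> k*u"
  using assms mult_right_mono[of 1 k u] by simp

lemma F1: fixes k x :: real assumes "k \<ge> 1" "0 \<le> x" "k*x \<le> pi"
  shows "sin (k*x) \<le> k * sin x"
proof -
  have "(\<lambda>x. k * sin x - sin (k*x)) 0 \<le> (\<lambda>x. k * sin x - sin (k*x)) x"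
  proof (rule DERIV_nonneg_imp_nondecreasing[OF assms(2)])
    fix u assume u: "0 \<le> u" "u \<le> x"
    have D: "((\<lambda>x. k * sin x - sin (k*x)) has_real_derivative (k * cos u - cos (k*u) * k)) (at u)"
      by (auto intro!: derivative_eq_intros)
    have ku: "k*u \<le> k*x" using u assms by (auto intro!: mult_left_mono)
    hence kup: "k*u \<le> pi" using assms by linarith
    have C: "cos (k*u) \<le> cos u"
      using u assms kmono[OF assms(1) u(1)] kup by (auto intro!: cos_monotone_0_pi_le)
    from D C show "\<exists>y. ((\<lambda>x. k * sin x - sin (k*x)) has_real_derivative y) (at u) \<and> 0 \<le> y"
      using assms by (intro exI[of _ "k * cos u - cos (k*u) * k"]) (auto simp: algebra_simps)
  qed
  then show ?thesis by simp
qed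

lemma F2: fixes k x :: real assumes "k \<ge> 1" "0 \<le> x"
  shows "k * sinh x \<le> sinh (k*x)"
proof -
  have "(\<lambda>x. sinh (k*x) - k * sinh x) 0 \<le> (\<lambda>x. sinh (k*x) - k * sinh x) x"
  proof (rule DERIV_nonneg_imp_nondecreasing[OF assms(2)])
    fix u assume u: "0 \<le> u" "u \<le> x"
    have "((\<lambda>x. sinh (k*x) - k * sinh x) has_real_derivative (cosh (k*u) * k - k * cosh u)) (at u)"
      by (auto intro!: derivative_eq_intros)
    moreover have "cosh u \<le> cosh (k*u)"
      using u assms kmono[OF assms(1) u(1)] by (subst cosh_real_nonneg_le_iff) auto
    ultimately show "\<exists>y. ((\<lambda>x. sinh (k*x) - k * sinh x) has_real_derivative y) (at u) \<and> 0 \<le> y"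
      using assms by (intro exI[of _ "cosh (k*u) * k - k * cosh u"]) (auto simp: algebra_simps)
  qed
  then show ?thesis by simp
qed

lemma n_nonpos: fixes k x :: real assumes "k \<ge> 1" "0 \<le> x" "k*x \<le> pi"
  shows "k * cos (k*x) * sin x - sin (k*x) * cos x \<le> 0"
proof -
  let ?n = "\<lambda>x. k * cos (k*x) * sin x - sin (k*x) * cos x"
  have "?n x \<le> ?n 0"
  proof (rule DERIV_nonpos_imp_nonincreasing[OF assms(2)])
    fix u assume u: "0 \<le> u" "u \<le> x"
    have D: "(?n has_real_derivative ((1 - k^2) * sin (k*u) * sin u)) (at u)"
      by (auto intro!: derivative_eq_intros simp: algebra_simps power2_eq_square)
    have ku: "k*u \<le> k*x" using u assms by (auto intro!: mult_left_mono)
    hence kup: "k*u \<le> pi" using assms by linarith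
    have S: "sin (k*u) \<ge> 0" "sin u \<ge> 0"
      using u assms kmono[OF assms(1) u(1)] kup by (auto intro!: sin_ge_zero)
    have "1 * 1 \<le> k * k" using assms by (intro mult_mono) auto
    hence K: "1 - k^2 \<le> 0" by (simp add: power2_eq_square)
    have "(1 - k^2) * sin (k*u) * sin u \<le> 0"
      by (rule mult_nonpos_nonneg[OF mult_nonpos_nonneg[OF K S(1)] S(2)])
    with D show "\<exists>y. (?n has_real_derivative y) (at u) \<and> y \<le> 0"
      by (intro exI[of _ "(1 - k^2) * sin (k*u) * sin u"]) (auto intro: mult_nonpos_nonneg)
  qed
  then show ?thesis by simp
qed

lemma F3: fixes k r t :: real assumes "k \<ge> 1" "0 \<le> r" "r \<le> t" "t < pi" "k*t \<le> pi"
  shows "sin r * sin (k*t) \<le> sin (k*r) * sin t"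
proof (cases "r = 0")
  case True then show ?thesis using assms by (simp add: sin_ge_zero)
next
  case False
  then have r0: "0 < r" using assms by auto
  let ?q = "\<lambda>x. sin (k*x) / sin x"
  have q: "?q t \<le> ?q r"
  proof (rule DERIV_nonpos_imp_nonincreasing[OF assms(3)])
    fix u assume u: "r \<le> u" "u \<le> t"
    have su: "sin u > 0" using u r0 assms by (auto intro!: sin_gt_zero)
    have D0: "(?q has_real_derivative ((cos (k*u) * k * sin u - sin (k*u) * cos u) / (sin u)^2)) (at u)"
      using su by (auto intro!: derivative_eq_intros simp: power2_eq_square)
    have "cos (k*u) * k * sin u = k * cos (k*u) * sin u" by (simp add: ac_simps)
    with D0 have D: "(?q has_real_derivative ((k * cos (k*u) * sin u - sin (k*u) * cos u) / (sin u)^2)) (at u)"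
      by simp
    have ku: "k*u \<le> k*t" using u assms r0 by (auto intro!: mult_left_mono)
    hence kup: "k*u \<le> pi" using assms by linarith
    have "k * cos (k*u) * sin u - sin (k*u) * cos u \<le> 0"
      using n_nonpos[OF assms(1) _ kup] u r0 by auto
    hence "(k * cos (k*u) * sin u - sin (k*u) * cos u) / (sin u)^2 \<le> 0"
      by (rule divide_nonpos_nonneg) simp
    with D show "\<exists>y. (?q has_real_derivative y) (at u) \<and> y \<le> 0"
      by blast
  qed
  have p: "sin r > 0" "sin t > 0" using r0 assms by (auto intro!: sin_gt_zero)
  show ?thesis using divle[OF p(2) p(1) q] by (simp add: ac_simps)
qed
lemma m_nonneg: fixes t :: real assumes "0 \<le> t" "t \<le> pi"
  shows "0 \<le> 3 * sin t - 3 * t * cos t - sin t ^ 3"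
proof -
  let ?m = "\<lambda>t. 3 * sin t - 3 * t * cos t - sin t ^ 3"
  have "?m 0 \<le> ?m t"
  proof (rule DERIV_nonneg_imp_nondecreasing[OF assms(1)])
    fix u assume u: "0 \<le> u" "u \<le> t"
    have D: "(?m has_real_derivative (3 * sin u * (u - sin u * cos u))) (at u)"
      by (auto intro!: derivative_eq_intros simp: algebra_simps power2_eq_square)
    have "sin (2*u) \<le> 2*u" using u by (intro sin_x_le_x) auto
    hence "sin u * cos u \<le> u" by (simp add: sin_double)
    moreover have "sin u \<ge> 0" using u assms by (auto intro!: sin_ge_zero)
    ultimately have "3 * sin u * (u - sin u * cos u) \<ge> 0" by simp
    with D show "\<exists>y. (?m has_real_derivative y) (at u) \<and> 0 \<le> y" by blast
  qed
  then show ?thesis by simp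
qed

lemma P_mono: fixes c d :: real assumes "0 < c" "c \<le> d" "d < pi"
  shows "c^2 / (sin c)^2 - c^2/3 \<le> d^2 / (sin d)^2 - d^2/3"
proof (rule DERIV_nonneg_imp_nondecreasing[OF assms(2)])
  fix u assume u: "c \<le> u" "u \<le> d"
  have su: "sin u > 0" using u assms by (auto intro!: sin_gt_zero)
  have D: "((\<lambda>x. x^2 / (sin x)^2 - x^2/3) has_real_derivative
     (2 * u * (3 * sin u - 3 * u * cos u - sin u ^ 3) / (3 * sin u ^ 3))) (at u)"
    using su by (auto intro!: derivative_eq_intros simp: field_simps power2_eq_square power3_eq_cube)
  have "0 \<le> 3 * sin u - 3 * u * cos u - sin u ^ 3" using u assms by (intro m_nonneg) auto
  hence "0 \<le> 2 * u * (3 * sin u - 3 * u * cos u - sin u ^ 3) / (3 * sin u ^ 3)"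
    using su u assms by (auto intro!: divide_nonneg_pos mult_nonneg_nonneg)
  with D show "\<exists>y. ((\<lambda>x. x^2 / (sin x)^2 - x^2/3) has_real_derivative y) (at u) \<and> 0 \<le> y" by blast
qed

lemma m2_nonneg: fixes t :: real assumes "0 \<le> t"
  shows "0 \<le> sinh t ^ 3 + 3 * sinh t - 3 * t * cosh t"
proof -
  let ?h = "\<lambda>t. sinh t * cosh t - t"
  have h: "?h 0 \<le> ?h u" if "0 \<le> u" for u :: real
  proof (rule DERIV_nonneg_imp_nondecreasing[OF that])
    fix v assume v: "0 \<le> v" "v \<le> u"
    have D: "(?h has_real_derivative (2 * sinh v ^ 2)) (at v)"
      by (auto intro!: derivative_eq_intros simp: algebra_simps power2_eq_square cosh_square_eq[unfolded power2_eq_square])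
    then show "\<exists>y. (?h has_real_derivative y) (at v) \<and> 0 \<le> y" by force
  qed
  let ?m = "\<lambda>t. sinh t ^ 3 + 3 * sinh t - 3 * t * cosh t"
  have "?m 0 \<le> ?m t"
  proof (rule DERIV_nonneg_imp_nondecreasing[OF assms(1)])
    fix u assume u: "0 \<le> u" "u \<le> t"
    have D: "(?m has_real_derivative (3 * sinh u * (sinh u * cosh u - u))) (at u)"
      by (auto intro!: derivative_eq_intros simp: algebra_simps power2_eq_square)
    have "sinh u * cosh u - u \<ge> 0" using h[OF u(1)] by simp
    moreover have "sinh u \<ge> 0" using u by simp
    ultimately have "3 * sinh u * (sinh u * cosh u - u) \<ge> 0" by simp
    with D show "\<exists>y. (?m has_real_derivative y) (at u) \<and> 0 \<le> y" by blast
  qed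
  then show ?thesis by simp
qed

lemma R_mono: fixes c d :: real assumes "0 < c" "c \<le> d"
  shows "c^2 / (sinh c)^2 + c^2/3 \<le> d^2 / (sinh d)^2 + d^2/3"
proof (rule DERIV_nonneg_imp_nondecreasing[OF assms(2)])
  fix u assume u: "c \<le> u" "u \<le> d"
  have su: "sinh u > 0" using u assms by auto
  have D: "((\<lambda>x. x^2 / (sinh x)^2 + x^2/3) has_real_derivative
     (2 * u * (sinh u ^ 3 + 3 * sinh u - 3 * u * cosh u) / (3 * sinh u ^ 3))) (at u)"
    using su by (auto intro!: derivative_eq_intros simp: field_simps power2_eq_square power3_eq_cube)
  have "0 \<le> sinh u ^ 3 + 3 * sinh u - 3 * u * cosh u" using u assms by (intro m2_nonneg) auto
  hence "0 \<le> 2 * u * (sinh u ^ 3 + 3 * sinh u - 3 * u * cosh u) / (3 * sinh u ^ 3)"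
    using su u assms by (auto intro!: divide_nonneg_pos mult_nonneg_nonneg)
  with D show "\<exists>y. ((\<lambda>x. x^2 / (sinh x)^2 + x^2/3) has_real_derivative y) (at u) \<and> 0 \<le> y" by blast
qed


lemma sin_sq_diff: fixes a b :: real shows "sin a ^ 2 - sin b ^ 2 = sin (a+b) * sin (a-b)"
proof -
  have "sin (a+b) * sin (a-b) = sin a^2 * cos b^2 - cos a^2 * sin b^2"
    by (simp add: sin_add sin_diff algebra_simps power2_eq_square)
  also have "\<dots> = sin a ^ 2 - sin b ^ 2" by (simp add: cos_squared_eq algebra_simps)
  finally show ?thesis by simp
qed

lemma alg_P: fixes a b c2 k :: real assumes "0<a" "0<b" "0<c2"
  "c2/b - c2/3 \<le> k^2*c2/a - k^2*c2/3"
  shows "(k^2-1)*a*b \<le> 3*(k^2*b - a)"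
proof -
  have h: "(c2/b - c2/3) * (3*a*b/c2) \<le> (k^2*c2/a - k^2*c2/3) * (3*a*b/c2)"
    using assms by (intro mult_right_mono) auto
  have e1: "(c2/b - c2/3) * (3*a*b/c2) = 3*a - a*b" using assms by (simp add: field_simps)
  have e2: "(k^2*c2/a - k^2*c2/3) * (3*a*b/c2) = 3*k^2*b - k^2*a*b" using assms by (simp add: field_simps)
  from h e1 e2 have "3*a - a*b \<le> 3*k^2*b - k^2*a*b" by simp
  then show ?thesis by (simp add: algebra_simps)
qed

lemma alg_R: fixes p q c2 k :: real assumes "0<p" "0<q" "0<c2"
  "c2/p + c2/3 \<le> k^2*c2/q + k^2*c2/3"
  shows "3*(q - k^2*p) \<le> (k^2-1)*p*q"
proof -
  have h: "(c2/p + c2/3) * (3*p*q/c2) \<le> (k^2*c2/q + k^2*c2/3) * (3*p*q/c2)"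
    using assms by (intro mult_right_mono) auto
  have e1: "(c2/p + c2/3) * (3*p*q/c2) = 3*q + p*q" using assms by (simp add: field_simps)
  have e2: "(k^2*c2/q + k^2*c2/3) * (3*p*q/c2) = 3*k^2*p + k^2*p*q" using assms by (simp add: field_simps)
  from h e1 e2 have "3*q + p*q \<le> 3*k^2*p + k^2*p*q" by simp
  then show ?thesis by (simp add: algebra_simps)
qed

lemma L_P: fixes k c :: real assumes "k \<ge> 1" "0 < c" "k*c < pi"
  shows "(k^2-1) * sin (k*c)^2 * sin c^2 \<le> 3*(k^2 * sin c^2 - sin (k*c)^2)"
proof -
  have kc: "c \<le> k*c" using kmono[OF assms(1)] assms by auto
  have cp: "c < pi" using kc assms by linarith
  have "sin (k*c) > 0" "sin c > 0" using assms kc cp by (auto intro!: sin_gt_zero)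
  moreover have "c^2 / (sin c)^2 - c^2/3 \<le> (k*c)^2 / (sin (k*c))^2 - (k*c)^2/3"
    using assms kc by (intro P_mono) auto
  ultimately show ?thesis
    using assms cp by (intro alg_P[of "sin (k*c)^2" "sin c^2" "c^2" k]) (auto simp: power_mult_distrib)
qed

lemma L_R: fixes k m :: real assumes "k \<ge> 1"
  shows "3*(sinh (k*m)^2 - k^2 * sinh m^2) \<le> (k^2-1) * sinh m^2 * sinh (k*m)^2"
proof -
  have main: "3*(sinh (k*m)^2 - k^2 * sinh m^2) \<le> (k^2-1) * sinh m^2 * sinh (k*m)^2" if m: "m > 0" for m
  proof -
    have kc: "m \<le> k*m" using kmono[OF assms(1)] m by auto
    have "sinh (k*m) > 0" "sinh m > 0" using assms m kc by auto
    moreover have "m^2 / (sinh m)^2 + m^2/3 \<le> (k*m)^2 / (sinh (k*m))^2 + (k*m)^2/3"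
      using assms kc m by (intro R_mono) auto
    ultimately show ?thesis
      using assms m by (intro alg_R[of "sinh m^2" "sinh (k*m)^2" "m^2" k]) (auto simp: power_mult_distrib)
  qed
  consider "m > 0" | "m = 0" | "m < 0" by linarith
  then show ?thesis
  proof cases
    case 1 then show ?thesis by (rule main)
  next
    case 2 then show ?thesis by simp
  next
    case 3
    from main[of "-m"] 3 show ?thesis by simp
  qed
qed

lemma sq_le: fixes x y :: real assumes "0 \<le> x" "x \<le> y" shows "x^2 \<le> y^2"
  using assms by (intro power_mono) auto

lemma core_low: fixes k r t A A' :: real
  assumes k: "k \<ge> 1" and r: "0 \<le> r" "r \<le> t" and kt: "k*t \<le> pi/2"
    and A: "0 \<le> A" "k^2*A \<le> A'"
  shows "(A + sin r^2) * (A' + sin (k*t)^2) \<le> (A' + sin (k*r)^2) * (A + sin t^2)"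
proof -
  have tk: "t \<le> k*t" using kmono[OF k] r by auto
  have rk: "r \<le> k*r" using kmono[OF k] r by auto
  have krt: "k*r \<le> k*t" using r k by (intro mult_left_mono) auto
  have t2: "t \<le> pi/2" using tk kt by linarith
  have s0: "0 \<le> sin r" using r t2 by (intro sin_ge_zero) auto
  have srt: "sin r \<le> sin t" using r t2 by (intro sin_monotone_2pi_le) auto
  have s12: "sin r^2 \<le> sin t^2" by (rule sq_le[OF s0 srt])
  have kp: "k*(t+r) \<le> pi" using kt krt by (simp add: algebra_simps)
  have "0 \<le> k*r" using r k by simp
  moreover have "k*(t-r) = k*t - k*r" by (simp add: algebra_simps)
  ultimately have kp2: "k*(t-r) \<le> pi" using kt pi_gt_zero by linarith
  have f1: "sin (k*(t+r)) \<le> k * sin (t+r)" using F1[OF k _ kp] r by auto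
  have f2: "sin (k*(t-r)) \<le> k * sin (t-r)" using F1[OF k _ kp2] r by auto
  have n2: "0 \<le> sin (k*(t-r))" using kp2 r k by (intro sin_ge_zero) auto
  have n1: "0 \<le> sin (k*(t+r))" using kp r k by (intro sin_ge_zero) (auto intro: mult_nonneg_nonneg)
  have "sin (k*t)^2 - sin (k*r)^2 = sin (k*(t+r)) * sin (k*(t-r))"
    by (simp add: sin_sq_diff algebra_simps)
  also have "\<dots> \<le> (k * sin (t+r)) * (k * sin (t-r))"
    using f1 f2 n1 n2 by (intro mult_mono) auto
  also have "\<dots> = k^2 * (sin (t+r) * sin (t-r))" by (simp add: algebra_simps power2_eq_square)
  also have "\<dots> = k^2 * (sin t^2 - sin r^2)" by (simp only: sin_sq_diff)
  finally have td: "sin (k*t)^2 - sin (k*r)^2 \<le> k^2 * (sin t^2 - sin r^2)" .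
  have tp: "t < pi" using t2 pi_gt_zero by linarith
  have ktp: "k*t \<le> pi" using kt pi_gt_zero by linarith
  have f3: "sin r * sin (k*t) \<le> sin (k*r) * sin t" using F3[OF k r tp ktp] .
  have "0 \<le> sin r * sin (k*t)" using s0 tk ktp r k by (intro mult_nonneg_nonneg sin_ge_zero) auto
  hence "(sin r * sin (k*t))^2 \<le> (sin (k*r) * sin t)^2" using f3 by (intro sq_le)
  hence c3: "sin r^2 * sin (k*t)^2 \<le> sin (k*r)^2 * sin t^2" by (simp add: power_mult_distrib)
  have h1: "A * (sin (k*t)^2 - sin (k*r)^2) \<le> A * (k^2 * (sin t^2 - sin r^2))"
    using td A by (intro mult_left_mono) auto
  have h2: "(k^2 * A) * (sin t^2 - sin r^2) \<le> A' * (sin t^2 - sin r^2)"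
    using A s12 by (intro mult_right_mono) auto
  show ?thesis using h1 h2 c3 by (simp add: algebra_simps)
qed

lemma core_up: fixes k c r t A A' :: real
  assumes k: "k \<ge> 1" and c: "0 < c" "k*c \<le> pi/2" and r: "0 \<le> r" "r \<le> t" "t \<le> c"
    and A: "0 \<le> A" "k^2*A \<le> A'" "3*(A' - k^2*A) \<le> (k^2-1)*A*A'" "A = 0 \<Longrightarrow> A' = 0"
  shows "sin (k*c)^2 * ((A' + sin (k*r)^2) * (A + sin t^2))
         \<le> k^2 * sin c^2 * ((A + sin r^2) * (A' + sin (k*t)^2))"
proof -
  define a where "a = sin (k*c)^2"
  define b where "b = sin c^2"
  have ck: "c \<le> k*c" using kmono[OF k] c by auto
  have cp: "c < pi" "k*c < pi" using ck c pi_gt_zero by linarith+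
  have "0 < k*c" using ck c by linarith
  hence "sin (k*c) > 0" using cp by (intro sin_gt_zero) auto
  hence a0: "a > 0" unfolding a_def by simp
  have "sin c > 0" using cp c by (intro sin_gt_zero) auto
  hence b0: "b > 0" unfolding b_def by simp
  have A'0: "0 \<le> A'" using A k by (meson order.trans mult_nonneg_nonneg zero_le_power2)
  have ha: "(A + sin t^2) * (A' + a) \<le> (A' + sin (k*t)^2) * (A + b)"
    unfolding a_def b_def using core_low[OF k _ r(3) c(2) A(1) A(2)] r by linarith
  have krp: "k*r \<le> pi"
  proof -
    have "k*r \<le> k*c" using r k by (intro mult_left_mono) auto
    thus ?thesis using c pi_gt_zero by linarith
  qed
  have "sin (k*r) \<le> k * sin r" using F1[OF k r(1) krp] .
  moreover have "0 \<le> sin (k*r)" using krp r k by (intro sin_ge_zero) auto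
  ultimately have "sin (k*r)^2 \<le> (k * sin r)^2" by (intro sq_le)
  hence hb: "sin (k*r)^2 \<le> k^2 * sin r^2" by (simp add: power_mult_distrib)
  have LP: "(k^2-1) * a * b \<le> 3*(k^2 * b - a)"
    using L_P[OF k c(1) cp(2)] unfolding a_def b_def by (simp add: algebra_simps)
  have "a*b*(3*(A' - k^2*A)) \<le> a*b*((k^2-1)*A*A')"
    using A(3) a0 b0 by (intro mult_left_mono) auto
  also have "\<dots> = (A*A') * ((k^2-1)*a*b)" by (simp add: algebra_simps)
  also have "\<dots> \<le> (A*A') * (3*(k^2 * b - a))"
    using LP A(1) A'0 by (intro mult_left_mono) auto
  finally have hc0: "a*b*(3*(A' - k^2*A)) \<le> (A*A') * (3*(k^2 * b - a))" .
  have hc: "a * A' * (A + b) \<le> k^2 * b * A * (A' + a)"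
    using hc0 by (simp add: algebra_simps)
  have s0: "0 \<le> sin (k*r)^2" "0 \<le> sin t^2" "0 \<le> sin r^2" "0 \<le> sin (k*t)^2" by simp_all
  show ?thesis
  proof (cases "A = 0")
    case True
    then have A'z: "A' = 0" using A(4) by simp
    from ha have "sin t^2 * a \<le> sin (k*t)^2 * b" using True A'z by simp
    hence "sin (k*r)^2 * (a * sin t^2) \<le> sin (k*r)^2 * (sin (k*t)^2 * b)"
      by (intro mult_left_mono) (auto simp: mult.commute)
    also have "\<dots> \<le> (k^2 * sin r^2) * (sin (k*t)^2 * b)"
      using hb b0 by (intro mult_right_mono) auto
    finally show ?thesis unfolding a_def[symmetric] b_def[symmetric] using True A'z
      by (simp add: algebra_simps)
  next
    case False
    then have Ap: "A > 0" using A(1) by simp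
    have "A * sin (k*r)^2 \<le> A * (k^2 * sin r^2)" using hb Ap by (intro mult_left_mono) auto
    also have "\<dots> = (k^2*A) * sin r^2" by simp
    also have "\<dots> \<le> A' * sin r^2" using A(2) by (intro mult_right_mono) auto
    finally have hb': "A * (A' + sin (k*r)^2) \<le> A' * (A + sin r^2)" by (simp add: algebra_simps)
    have "(A * (A' + sin (k*r)^2)) * ((A' + a) * (A + sin t^2))
          \<le> (A' * (A + sin r^2)) * ((A' + sin (k*t)^2) * (A + b))"
    proof (rule mult_mono[OF hb'])
      show "(A' + a) * (A + sin t^2) \<le> (A' + sin (k*t)^2) * (A + b)" using ha by (simp add: mult.commute)
      show "0 \<le> A' * (A + sin r^2)" using A'0 A(1) by simp
      show "0 \<le> (A' + a) * (A + sin t^2)" using A'0 A(1) a0 by simp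
    qed
    hence "a * ((A * (A' + sin (k*r)^2)) * ((A' + a) * (A + sin t^2)))
          \<le> a * ((A' * (A + sin r^2)) * ((A' + sin (k*t)^2) * (A + b)))"
      using a0 by (intro mult_left_mono) auto
    also have "\<dots> = (a * A' * (A + b)) * ((A + sin r^2) * (A' + sin (k*t)^2))"
      by (simp add: algebra_simps)
    also have "\<dots> \<le> (k^2 * b * A * (A' + a)) * ((A + sin r^2) * (A' + sin (k*t)^2))"
      using hc s0 A(1) A'0 by (intro mult_right_mono) auto
    finally have fin: "(A * (A' + a)) * (a * ((A' + sin (k*r)^2) * (A + sin t^2)))
          \<le> (A * (A' + a)) * (k^2 * b * ((A + sin r^2) * (A' + sin (k*t)^2)))"
      by (simp add: algebra_simps)
    have "0 < A * (A' + a)" using Ap a0 A'0 by simp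
    with fin show ?thesis unfolding a_def b_def by (simp add: mult_le_cancel_left_pos)
  qed
qed


definition sg :: "real \<Rightarrow> complex \<Rightarrow> complex" where "sg a z = cis a * cnj z"

lemma sg_sg[simp]: "sg a (sg a z) = z"
proof -
  have "sg a (sg a z) = (cis a * cis (-a)) * z" by (simp add: sg_def cis_cnj mult.assoc)
  also have "\<dots> = z" by (simp add: cis_mult)
  finally show ?thesis .
qed

lemma dist_sg[simp]: "dist (sg a z) (sg a w) = dist z w"
proof -
  have "sg a z - sg a w = cis a * cnj (z - w)" by (simp add: sg_def algebra_simps)
  hence "norm (sg a z - sg a w) = norm (cnj (z - w))" by (simp add: norm_mult del: complex_cnj_diff)
  hence "norm (sg a z - sg a w) = norm (z - w)" by (simp only: complex_mod_cnj)
  thus ?thesis by (simp add: dist_norm)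
qed

lemma Im_sg: "Im (sg a z) = Re z * sin a - Im z * cos a"
  by (simp add: sg_def cis.sel)

lemma Re_sg: "Re (sg a z) = Re z * cos a + Im z * sin a"
  by (simp add: sg_def cis.sel)

lemma sg_lin: "sg a (of_real u * z - w) = of_real u * sg a z - sg a w"
  by (simp add: sg_def algebra_simps)

lemma sg_polar: "sg a (of_real r * cis t) = of_real r * cis (a - t)"
  by (simp add: sg_def cis_cnj cis_mult)

lemma sin_pos_range: fixes x :: real assumes "-pi < x" "x \<le> pi" "sin x > 0" shows "0 < x \<and> x < pi"
proof (rule ccontr)
  assume "\<not> (0 < x \<and> x < pi)"
  then consider "x \<le> 0" | "x = pi" using assms by linarith
  then show False
  proof cases
    case 1
    have "0 \<le> sin (-x)" using 1 assms by (intro sin_ge_zero) auto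
    then show False using assms by simp
  next
    case 2 then show False using assms by simp
  qed
qed

lemma sector_char: assumes "0 < \<alpha>" "\<alpha> \<le> pi"
  shows "sector \<alpha> = {z. 0 < Im z \<and> 0 < Im (sg \<alpha> z)}"
proof (intro set_eqI iffI)
  fix z assume "z \<in> sector \<alpha>"
  then obtain t where z: "z \<noteq> 0" "0 < t" "t < \<alpha>" "z = complex_of_real (cmod z) * cis t"
    by (auto simp: sector_def)
  have r: "cmod z > 0" using z by simp
  have "Im z = cmod z * sin t" by (subst z(4)) (simp add: cis.sel)
  moreover have "sin t > 0" using z assms by (intro sin_gt_zero) auto
  ultimately have i1: "0 < Im z" using r by simp
  have "Im (sg \<alpha> z) = cmod z * sin (\<alpha> - t)" by (subst z(4)) (simp add: sg_polar cis.sel)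
  moreover have "sin (\<alpha> - t) > 0" using z assms by (intro sin_gt_zero) auto
  ultimately have "0 < Im (sg \<alpha> z)" using r by simp
  with i1 show "z \<in> {z. 0 < Im z \<and> 0 < Im (sg \<alpha> z)}" by simp
next
  fix z assume "z \<in> {z. 0 < Im z \<and> 0 < Im (sg \<alpha> z)}"
  then have i: "0 < Im z" "0 < Im (sg \<alpha> z)" by auto
  then have z0: "z \<noteq> 0" by auto
  define t where "t = Arg z"
  have zp: "z = complex_of_real (cmod z) * cis t" unfolding t_def
    by (metis rcis_cmod_Arg rcis_def)
  have r: "cmod z > 0" using z0 by simp
  have "Im z = cmod z * sin t" by (subst zp) (simp add: cis.sel)
  hence "sin t > 0" using i r by (simp add: zero_less_mult_iff)
  hence t: "0 < t" "t < pi" using sin_pos_range[of t] Arg_bounded[of z] unfolding t_def by auto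
  have "Im (sg \<alpha> z) = cmod z * sin (\<alpha> - t)" by (subst zp) (simp add: sg_polar cis.sel)
  hence "sin (\<alpha> - t) > 0" using i r by (simp add: zero_less_mult_iff)
  hence "0 < \<alpha> - t" using sin_pos_range[of "\<alpha> - t"] t assms by auto
  then show "z \<in> sector \<alpha>" unfolding sector_def using z0 zp t by auto
qed

lemma cont_Im_sg: "continuous_on UNIV (\<lambda>z. Im (sg a z))"
  unfolding Im_sg by (intro continuous_intros)

lemma sector_open: assumes "0 < \<alpha>" "\<alpha> \<le> pi" shows "open (sector \<alpha>)"
proof -
  have "open ({z. 0 < Im z} \<inter> {z. 0 < Im (sg \<alpha> z)})"
    by (intro open_Int open_Collect_less continuous_intros cont_Im_sg)
  thus ?thesis using sector_char[OF assms] by (simp add: Collect_conj_eq)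
qed

lemma frontier_sector: assumes "0 < \<alpha>" "\<alpha> \<le> pi"
  shows "m \<in> frontier (sector \<alpha>) \<longleftrightarrow>
     0 \<le> Im m \<and> 0 \<le> Im (sg \<alpha> m) \<and> (Im m = 0 \<or> Im (sg \<alpha> m) = 0)"
proof -
  let ?S = "sector \<alpha>"
  let ?C = "{z. 0 \<le> Im z \<and> 0 \<le> Im (sg \<alpha> z)}"
  have cC: "closed ?C"
  proof -
    have "closed ({z. 0 \<le> Im z} \<inter> {z. 0 \<le> Im (sg \<alpha> z)})"
      by (intro closed_Int closed_Collect_le continuous_intros cont_Im_sg)
    thus ?thesis by (simp add: Collect_conj_eq)
  qed
  have "closure ?S \<subseteq> ?C" using cC sector_char[OF assms]
    by (intro closure_minimal) auto
  moreover have "?C \<subseteq> closure ?S"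
  proof
    fix z assume z: "z \<in> ?C"
    have s: "sin (\<alpha>/2) > 0" using assms by (intro sin_gt_zero) auto
    show "z \<in> closure ?S" unfolding closure_approachable
    proof (intro allI impI)
      fix e :: real assume e: "e > 0"
      let ?y = "z + of_real (e/2) * cis (\<alpha>/2)"
      have iy: "Im ?y = Im z + e/2 * sin (\<alpha>/2)" by (simp add: cis.sel)
      have sd: "sin \<alpha> * cos (\<alpha>/2) - cos \<alpha> * sin (\<alpha>/2) = sin (\<alpha>/2)"
        using sin_diff[of \<alpha> "\<alpha>/2"] by simp
      have "Im (sg \<alpha> ?y) = Im (sg \<alpha> z) + e/2 * (sin \<alpha> * cos (\<alpha>/2) - cos \<alpha> * sin (\<alpha>/2))"
        by (simp add: Im_sg cis.sel algebra_simps)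
      hence "Im (sg \<alpha> ?y) = Im (sg \<alpha> z) + e/2 * sin (\<alpha>/2)" using sd by simp
      moreover
      moreover have "0 < e/2 * sin (\<alpha>/2)" using e s by simp
      ultimately have "?y \<in> ?S" using z iy sector_char[OF assms] by auto
      moreover have "dist ?y z = e/2" using e by (simp add: dist_norm norm_mult)
      ultimately show "\<exists>y\<in>?S. dist y z < e" using e by (intro bexI[of _ ?y]) auto
    qed
  qed
  ultimately have "closure ?S = ?C" by blast
  moreover have "interior ?S = ?S" using sector_open[OF assms] by (rule interior_open)
  ultimately have fr: "frontier ?S = ?C - ?S" by (simp add: frontier_def)
  have e1: "m \<in> frontier ?S \<longleftrightarrow> m \<in> ?C \<and> m \<notin> ?S" using fr by blast
  have e2: "m \<in> ?S \<longleftrightarrow> 0 < Im m \<and> 0 < Im (sg \<alpha> m)" using sector_char[OF assms] by blast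
  show ?thesis using e1 e2 by auto
qed


lemma dist_line: assumes "Im m = 0" shows "\<bar>Im y\<bar> \<le> dist y m"
proof -
  have "\<bar>Im (y - m)\<bar> \<le> cmod (y - m)" by (rule abs_Im_le_cmod)
  thus ?thesis using assms by (simp add: dist_norm)
qed

lemma dist_line_eq: assumes "Im m = 0" "dist y m = Im y" shows "m = of_real (Re y)"
proof -
  have "(cmod (y - m))^2 = (Re (y - m))^2 + (Im (y - m))^2" by (rule cmod_power2)
  hence "(Im y)^2 = (Re y - Re m)^2 + (Im y)^2" using assms by (simp add: dist_norm)
  hence "Re m = Re y" by simp
  thus ?thesis using assms by (simp add: complex_eq_iff)
qed

lemma foot_alg: assumes "0 < Im u" "Im u \<le> Im (sg a u)" shows "0 \<le> Re u * sin a"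
proof -
  have "0 \<le> 1 + cos a" using cos_ge_minus_one[of a] by linarith
  hence "0 \<le> Im u * (1 + cos a)" using assms by simp
  thus ?thesis using assms(2) unfolding Im_sg by (simp add: algebra_simps)
qed

context fixes \<alpha> :: real assumes a: "0 < \<alpha>" "\<alpha> \<le> pi"
begin

lemma memS: "y \<in> sector \<alpha> \<longleftrightarrow> 0 < Im y \<and> 0 < Im (sg \<alpha> y)"
  using sector_char[OF a] by blast

lemma foot1: assumes "y \<in> sector \<alpha>" "Im y \<le> Im (sg \<alpha> y)"
  shows "of_real (Re y) \<in> frontier (sector \<alpha>)"
  using foot_alg[of y \<alpha>] assms memS unfolding frontier_sector[OF a] by (simp add: Im_sg)

lemma foot2: assumes "y \<in> sector \<alpha>" "Im (sg \<alpha> y) \<le> Im y"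
  shows "sg \<alpha> (of_real (Re (sg \<alpha> y))) \<in> frontier (sector \<alpha>)"
proof -
  have "0 \<le> Re (sg \<alpha> y) * sin \<alpha>" using foot_alg[of "sg \<alpha> y" \<alpha>] assms memS by simp
  then show ?thesis unfolding frontier_sector[OF a] by (simp add: Im_sg)
qed

lemma bdist_S: assumes y: "y \<in> sector \<alpha>"
  shows "bdist (sector \<alpha>) y = min (Im y) (Im (sg \<alpha> y))"
proof (rule antisym)
  have yy: "0 < Im y" "0 < Im (sg \<alpha> y)" using y memS by auto
  show "bdist (sector \<alpha>) y \<le> min (Im y) (Im (sg \<alpha> y))"
  proof (cases "Im y \<le> Im (sg \<alpha> y)")
    case True
    have "infdist y (frontier (sector \<alpha>)) \<le> dist y (of_real (Re y))"
      by (rule infdist_le[OF foot1[OF y True]])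
    also have "dist y (of_real (Re y)) = Im y" using yy
      by (simp add: dist_norm cmod_def)
    finally show ?thesis using True by (simp add: bdist_def)
  next
    case False
    have "infdist y (frontier (sector \<alpha>)) \<le> dist y (sg \<alpha> (of_real (Re (sg \<alpha> y))))"
      using False by (intro infdist_le[OF foot2[OF y]]) auto
    also have "\<dots> = dist (sg \<alpha> y) (of_real (Re (sg \<alpha> y)))"
      by (metis dist_sg sg_sg)
    also have "\<dots> = Im (sg \<alpha> y)" using yy
      by (simp add: dist_norm cmod_def)
    finally show ?thesis using False by (simp add: bdist_def)
  qed
next
  have ne: "frontier (sector \<alpha>) \<noteq> {}"
  proof (cases "Im y \<le> Im (sg \<alpha> y)")
    case True then show ?thesis using foot1[OF y] by blast
  next
    case False then show ?thesis using foot2[OF y] by force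
  qed
  show "min (Im y) (Im (sg \<alpha> y)) \<le> bdist (sector \<alpha>) y"
    unfolding bdist_def infdist_notempty[OF ne]
  proof (rule cINF_greatest[OF ne])
    fix m assume m: "m \<in> frontier (sector \<alpha>)"
    then consider "Im m = 0" | "Im (sg \<alpha> m) = 0" unfolding frontier_sector[OF a] by blast
    then show "min (Im y) (Im (sg \<alpha> y)) \<le> dist y m"
    proof cases
      case 1 then show ?thesis using dist_line[of m y] by linarith
    next
      case 2 then show ?thesis using dist_line[of "sg \<alpha> m" "sg \<alpha> y"] by simp
    qed
  qed
qed

end

lemma sg_add: "sg a (z + w) = sg a z + sg a w" by (simp add: sg_def algebra_simps)
lemma sg_half: "sg a (z / 2) = sg a z / 2" by (simp add: sg_def)

lemma dist_cnj_self: "dist y (cnj y) = 2 * \<bar>Im y\<bar>"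
  by (simp add: dist_norm complex_diff_cnj norm_mult)

context fixes \<alpha> :: real assumes a: "0 < \<alpha>" "\<alpha> \<le> pi"
begin

lemma refl_S: assumes y: "y \<in> sector \<alpha>"
  shows "reflpts (sector \<alpha>) y =
    (if Im y = bdist (sector \<alpha>) y then {cnj y} else {}) \<union>
    (if Im (sg \<alpha> y) = bdist (sector \<alpha>) y then {sg \<alpha> (cnj (sg \<alpha> y))} else {})"
proof -
  define d where "d = bdist (sector \<alpha>) y"
  have dd: "d = min (Im y) (Im (sg \<alpha> y))" unfolding d_def by (rule bdist_S[OF a y])
  have yy: "0 < Im y" "0 < Im (sg \<alpha> y)" using y memS[OF a] by auto
  show ?thesis unfolding d_def[symmetric]
  proof (intro set_eqI iffI)
    fix x' assume x': "x' \<in> reflpts (sector \<alpha>) y"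
    define m where "m = (y + x')/2"
    have dx: "dist y x' = 2*d" and mf: "m \<in> frontier (sector \<alpha>)"
      using x' unfolding reflpts_def m_def d_def by auto
    have "dist y m = cmod ((y - x') / 2)" unfolding m_def dist_norm
      by (rule arg_cong[where f=cmod]) (simp add: field_simps)
    also have "\<dots> = d" using dx by (simp add: norm_divide dist_norm)
    finally have dm: "dist y m = d" .
    have x'm: "x' = 2*m - y" unfolding m_def by (simp add: field_simps)
    from mf consider "Im m = 0" | "Im (sg \<alpha> m) = 0" unfolding frontier_sector[OF a] by blast
    then show "x' \<in> (if Im y = d then {cnj y} else {}) \<union>
      (if Im (sg \<alpha> y) = d then {sg \<alpha> (cnj (sg \<alpha> y))} else {})"
    proof cases
      case 1
      have "Im y \<le> dist y m" using dist_line[OF 1, of y] by linarith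
      hence e: "Im y = d" "dist y m = Im y" using dm dd by linarith+
      have "m = of_real (Re y)" by (rule dist_line_eq[OF 1 e(2)])
      hence "x' = cnj y" using x'm by (simp add: complex_eq_iff)
      then show ?thesis using e by simp
    next
      case 2
      have dm': "dist (sg \<alpha> y) (sg \<alpha> m) = d" using dm by simp
      have "Im (sg \<alpha> y) \<le> dist (sg \<alpha> y) (sg \<alpha> m)" using dist_line[OF 2, of "sg \<alpha> y"] by linarith
      hence e: "Im (sg \<alpha> y) = d" "dist (sg \<alpha> y) (sg \<alpha> m) = Im (sg \<alpha> y)" using dm' dd by linarith+
      have "sg \<alpha> m = of_real (Re (sg \<alpha> y))" by (rule dist_line_eq[OF 2 e(2)])
      moreover have "sg \<alpha> x' = of_real 2 * sg \<alpha> m - sg \<alpha> y" using x'm sg_lin[of \<alpha> 2 m y] by simp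
      ultimately have "sg \<alpha> x' = cnj (sg \<alpha> y)" by (simp add: complex_eq_iff)
      hence "x' = sg \<alpha> (cnj (sg \<alpha> y))" by (metis sg_sg)
      then show ?thesis using e by simp
    qed
  next
    fix x' assume x': "x' \<in> (if Im y = d then {cnj y} else {}) \<union>
      (if Im (sg \<alpha> y) = d then {sg \<alpha> (cnj (sg \<alpha> y))} else {})"
    then consider "Im y = d" "x' = cnj y" | "Im (sg \<alpha> y) = d" "x' = sg \<alpha> (cnj (sg \<alpha> y))"
      by (auto split: if_splits)
    then show "x' \<in> reflpts (sector \<alpha>) y"
    proof cases
      case 1
      have "Im y \<le> Im (sg \<alpha> y)" using 1 dd by linarith
      from foot1[OF a y this] have "(y + x')/2 \<in> frontier (sector \<alpha>)"
        using 1 by (simp add: complex_add_cnj)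
      moreover have "dist y x' = 2*d" using 1 yy by (simp add: dist_cnj_self)
      ultimately show ?thesis unfolding reflpts_def d_def by simp
    next
      case 2
      have "Im (sg \<alpha> y) \<le> Im y" using 2 dd by linarith
      from foot2[OF a y this] have f: "sg \<alpha> (of_real (Re (sg \<alpha> y))) \<in> frontier (sector \<alpha>)" .
      have "of_real (Re (sg \<alpha> y)) = (sg \<alpha> y + cnj (sg \<alpha> y)) / 2" by (simp add: complex_add_cnj)
      hence "sg \<alpha> (of_real (Re (sg \<alpha> y))) = sg \<alpha> ((sg \<alpha> y + cnj (sg \<alpha> y)) / 2)" by (rule arg_cong)
      also have "\<dots> = (sg \<alpha> (sg \<alpha> y) + sg \<alpha> (cnj (sg \<alpha> y))) / 2" by (simp only: sg_half sg_add)
      also have "\<dots> = (y + x')/2" using 2 by simp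
      finally have "sg \<alpha> (of_real (Re (sg \<alpha> y))) = (y + x')/2" .
      with f have "(y + x')/2 \<in> frontier (sector \<alpha>)" by simp
      moreover have "dist y x' = dist (sg \<alpha> y) (cnj (sg \<alpha> y))" using 2 by (metis dist_sg sg_sg)
      hence "dist y x' = 2*d" using 2 yy by (simp add: dist_cnj_self)
      ultimately show ?thesis unfolding reflpts_def d_def by simp
    qed
  qed
qed

lemma INF_refl: assumes y: "y \<in> sector \<alpha>"
  shows "(INF y'\<in>reflpts (sector \<alpha>) y. dist x y') =
    (if Im y = bdist (sector \<alpha>) y \<and> Im (sg \<alpha> y) = bdist (sector \<alpha>) y
     then min (dist x (cnj y)) (dist x (sg \<alpha> (cnj (sg \<alpha> y))))
     else if Im y = bdist (sector \<alpha>) y then dist x (cnj y) else dist x (sg \<alpha> (cnj (sg \<alpha> y))))"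
proof -
  have dd: "bdist (sector \<alpha>) y = min (Im y) (Im (sg \<alpha> y))" by (rule bdist_S[OF a y])
  show ?thesis unfolding refl_S[OF y] using dd by (auto simp: Inf_insert_finite min_def)
qed

end

lemma dist_cnj_sq: "dist x (cnj y)^2 = dist x y^2 + 4 * Im x * Im y"
  unfolding dist_norm cmod_power2 by (simp add: power2_eq_square algebra_simps)

lemma dist_sg_cnj_sq: "dist x (sg a (cnj (sg a y)))^2 = dist x y^2 + 4 * Im (sg a x) * Im (sg a y)"
proof -
  have "dist x (sg a (cnj (sg a y))) = dist (sg a x) (cnj (sg a y))" by (metis dist_sg sg_sg)
  thus ?thesis using dist_cnj_sq[of "sg a x" "sg a y"] by simp
qed

lemma dcnj: "dist y (cnj x) = dist x (cnj y)"
proof -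
  have "y - cnj x = cnj (cnj y - x)" by simp
  hence "cmod (y - cnj x) = cmod (cnj y - x)" by (simp only: complex_mod_cnj)
  thus ?thesis by (simp add: dist_norm norm_minus_commute)
qed

lemma dist_sym_refl: "dist y (cnj x) = dist x (cnj y)"
  "dist y (sg a (cnj (sg a x))) = dist x (sg a (cnj (sg a y)))"
proof -
  show "dist y (cnj x) = dist x (cnj y)" by (rule dcnj)
  have "dist y (sg a (cnj (sg a x))) = dist (sg a y) (cnj (sg a x))" by (metis dist_sg sg_sg)
  also have "\<dots> = dist (sg a x) (cnj (sg a y))" by (rule dcnj)
  also have "\<dots> = dist x (sg a (cnj (sg a y)))" by (metis dist_sg sg_sg)
  finally show "dist y (sg a (cnj (sg a x))) = dist x (sg a (cnj (sg a y)))" .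
qed

lemma sqrt_dist_eq: assumes "d^2 = v" "0 \<le> d" shows "d = sqrt v"
  using assms by (metis real_sqrt_abs abs_of_nonneg)

lemma w_S: assumes a: "0 < \<alpha>" "\<alpha> \<le> pi" and x: "x \<in> sector \<alpha>" and y: "y \<in> sector \<alpha>"
  shows "w_metric (sector \<alpha>) x y = dist x y /
           sqrt (dist x y^2 + 4 * min (Im x * Im y) (Im (sg \<alpha> x) * Im (sg \<alpha> y)))"
proof -
  define p where "p = Im x"
  define q where "q = Im (sg \<alpha> x)"
  define p' where "p' = Im y"
  define q' where "q' = Im (sg \<alpha> y)"
  define E1 where "E1 = dist x (cnj y)"
  define E2 where "E2 = dist x (sg \<alpha> (cnj (sg \<alpha> y)))"
  define D where "D = dist x y^2"
  have pos: "0 < p" "0 < q" "0 < p'" "0 < q'" using x y memS[OF a] unfolding p_def q_def p'_def q'_def by auto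
  have dx: "bdist (sector \<alpha>) x = min p q" unfolding p_def q_def by (rule bdist_S[OF a x])
  have dy: "bdist (sector \<alpha>) y = min p' q'" unfolding p'_def q'_def by (rule bdist_S[OF a y])
  have I1: "(INF y'\<in>reflpts (sector \<alpha>) y. dist x y') =
     (if p' = min p' q' \<and> q' = min p' q' then min E1 E2 else if p' = min p' q' then E1 else E2)"
    using INF_refl[OF a y, of x] dy unfolding E1_def E2_def p'_def q'_def by simp
  have I2: "(INF x'\<in>reflpts (sector \<alpha>) x. dist y x') =
     (if p = min p q \<and> q = min p q then min E1 E2 else if p = min p q then E1 else E2)"
    using INF_refl[OF a x, of y] dx dist_sym_refl(1)[of y x] dist_sym_refl(2)[of y \<alpha> x] unfolding E1_def E2_def p_def q_def by simp
  have E1s: "E1 = sqrt (D + 4*p*p')" unfolding E1_def D_def p_def p'_def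
    by (rule sqrt_dist_eq) (simp_all add: dist_cnj_sq)
  have E2s: "E2 = sqrt (D + 4*q*q')" unfolding E2_def D_def q_def q'_def
    by (rule sqrt_dist_eq) (simp_all add: dist_sg_cnj_sq)
  have key: "min E1 E2 = sqrt (D + 4 * min (p*p') (q*q'))"
    unfolding E1s E2s by (cases "p*p' \<le> q*q'") (auto simp: min_def)
  have m: "min (INF y'\<in>reflpts (sector \<alpha>) y. dist x y') (INF x'\<in>reflpts (sector \<alpha>) x. dist y x') = min E1 E2"
  proof (rule antisym)
    show "min E1 E2 \<le> min (INF y'\<in>reflpts (sector \<alpha>) y. dist x y') (INF x'\<in>reflpts (sector \<alpha>) x. dist y x')"
      unfolding I1 I2 by auto
  next
    show "min (INF y'\<in>reflpts (sector \<alpha>) y. dist x y') (INF x'\<in>reflpts (sector \<alpha>) x. dist y x') \<le> min E1 E2"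
    proof (cases "p*p' \<le> q*q'")
      case True
      have "p' = min p' q' \<or> p = min p q"
      proof (rule ccontr)
        assume "\<not> ?thesis"
        hence "q' < p'" "q < p" by (auto simp: min_def split: if_splits)
        hence "q*q' < p*p'" using pos by (intro mult_strict_mono) auto
        thus False using True by simp
      qed
      moreover have "E1 \<le> E2" unfolding E1s E2s using True by simp
      ultimately show ?thesis unfolding I1 I2 by auto
    next
      case False
      have "q' = min p' q' \<or> q = min p q"
      proof (rule ccontr)
        assume "\<not> ?thesis"
        hence "p' < q'" "p < q" by (auto simp: min_def split: if_splits)
        hence "p*p' < q*q'" using pos by (intro mult_strict_mono) auto
        thus False using False by simp
      qed
      moreover have "E2 \<le> E1" unfolding E1s E2s using False by simp
      ultimately show ?thesis unfolding I1 I2 by (auto simp: min_def)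
    qed
  qed
  show ?thesis unfolding w_metric_def m key D_def p_def q_def p'_def q'_def by simp
qed


lemma sin_sq_diff': fixes a b :: real shows "sin a ^ 2 - sin b ^ 2 = sin (a+b) * sin (a-b)"
proof -
  have "sin (a+b) * sin (a-b) = sin a^2 * cos b^2 - cos a^2 * sin b^2"
    by (simp add: sin_add sin_diff algebra_simps power2_eq_square)
  also have "\<dots> = sin a ^ 2 - sin b ^ 2" by (simp add: cos_squared_eq algebra_simps)
  finally show ?thesis by simp
qed

lemma sin_le_lemma: fixes a b :: real assumes "0 \<le> a" "a \<le> b" "b \<le> pi - a" shows "sin a \<le> sin b"
proof (cases "b \<le> pi/2")
  case True then show ?thesis using assms by (intro sin_monotone_2pi_le) auto
next
  case False
  have "sin a \<le> sin (pi - b)" using assms False by (intro sin_monotone_2pi_le) auto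
  thus ?thesis by simp
qed

lemma sinh_id: fixes r s :: real assumes "0 < r" "0 < s"
  shows "(r - s)^2 = 4 * r * s * sinh (ln (s/r)/2)^2"
proof -
  define e where "e = exp (ln (s/r)/2)"
  have e0: "e > 0" unfolding e_def by simp
  have e2: "e^2 = s/r" unfolding e_def using assms by (simp add: exp_double[symmetric])
  have sh: "sinh (ln (s/r)/2) = (e - 1/e)/2" unfolding e_def sinh_field_def by (simp add: exp_minus field_simps)
  have "sinh (ln (s/r)/2)^2 = ((e - 1/e)/2)^2" by (simp only: sh)
  also have "\<dots> = (e^2 - 2 + 1/e^2)/4" using e0 by (simp add: field_simps power2_eq_square)
  also have "\<dots> = (s/r - 2 + r/s)/4"
  proof -
    have "1/e^2 = r/s" using e2 by simp
    thus ?thesis using e2 by simp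
  qed
  finally show ?thesis using assms by (simp add: field_simps power2_eq_square)
qed

lemma w_polar: fixes r s \<theta> \<phi> :: real
  assumes a: "0 < \<alpha>" "\<alpha> \<le> pi" and rs: "0 < r" "0 < s"
    and th: "0 < \<theta>" "\<theta> < \<alpha>" and ph: "0 < \<phi>" "\<phi> < \<alpha>"
  shows "w_metric (sector \<alpha>) (of_real r * cis \<theta>) (of_real s * cis \<phi>) =
    sqrt ((sinh (ln (s/r)/2)^2 + sin (\<bar>\<theta> - \<phi>\<bar>/2)^2) /
          (sinh (ln (s/r)/2)^2 + sin (min ((\<theta>+\<phi>)/2) (\<alpha> - (\<theta>+\<phi>)/2))^2))"
proof -
  define x where "x = of_real r * cis \<theta>"
  define y where "y = of_real s * cis \<phi>"
  define A where "A = sinh (ln (s/r)/2)^2"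
  define b where "b = (\<theta> - \<phi>)/2"
  define \<sigma> where "\<sigma> = (\<theta> + \<phi>)/2"
  define \<tau> where "\<tau> = min \<sigma> (\<alpha> - \<sigma>)"
  have Ix: "Im x = r * sin \<theta>" "Im (sg \<alpha> x) = r * sin (\<alpha> - \<theta>)"
    unfolding x_def by (simp_all add: sg_polar cis.sel)
  have Iy: "Im y = s * sin \<phi>" "Im (sg \<alpha> y) = s * sin (\<alpha> - \<phi>)"
    unfolding y_def by (simp_all add: sg_polar cis.sel)
  have "0 < sin \<theta>" "0 < sin (\<alpha> - \<theta>)" "0 < sin \<phi>" "0 < sin (\<alpha> - \<phi>)"
    using th ph a by (auto intro!: sin_gt_zero)
  hence xS: "x \<in> sector \<alpha>" and yS: "y \<in> sector \<alpha>" unfolding memS[OF a] Ix Iy using rs by simp_all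
  have tb: "2*b = \<theta> - \<phi>" unfolding b_def by simp
  have "dist x y^2 = (r*cos \<theta> - s*cos \<phi>)^2 + (r * sin \<theta> - s * sin \<phi>)^2"
    unfolding x_def y_def dist_norm cmod_power2 by (simp add: cis.sel)
  also have "\<dots> = r^2*(cos \<theta>^2 + sin \<theta>^2) + s^2*(cos \<phi>^2 + sin \<phi>^2)
           - 2 * r * s * (cos \<theta> * cos \<phi> + sin \<theta> * sin \<phi>)"
    by algebra
  also have "\<dots> = r^2 + s^2 - 2 * r * s * cos (2*b)"
    by (simp add: sin_cos_squared_add2 tb cos_diff)
  also have "\<dots> = (r - s)^2 + 4 * r * s * sin b^2" by (subst cos_double_sin) (simp add: power2_eq_square algebra_simps)
  finally have D: "dist x y^2 = 4 * r * s * (A + sin b^2)" using sinh_id[OF rs] unfolding A_def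
    by (simp add: algebra_simps)
  have e1: "\<sigma> + b = \<theta>" "\<sigma> - b = \<phi>" "(\<alpha> - \<sigma>) + b = \<alpha> - \<phi>" "(\<alpha> - \<sigma>) - b = \<alpha> - \<theta>"
    unfolding \<sigma>_def b_def by (simp_all add: field_simps)
  have P: "sin \<theta> * sin \<phi> = sin \<sigma>^2 - sin b^2"
    using sin_sq_diff'[of \<sigma> b] unfolding e1 by simp
  have Q0: "sin (\<alpha> - \<sigma>)^2 - sin b^2 = sin (\<alpha> - \<phi>) * sin (\<alpha> - \<theta>)"
    using sin_sq_diff'[of "\<alpha> - \<sigma>" b] unfolding e1 .
  have Q: "sin (\<alpha> - \<theta>) * sin (\<alpha> - \<phi>) = sin (\<alpha> - \<sigma>)^2 - sin b^2"
    using Q0 by (simp add: ac_simps)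
  have bd1: "0 \<le> \<sigma>" unfolding \<sigma>_def using th ph by (simp add: field_simps)
  have bd2: "\<sigma> \<le> pi" unfolding \<sigma>_def using th ph a by (simp add: field_simps)
  have bd3: "0 \<le> \<alpha> - \<sigma>" unfolding \<sigma>_def using th ph by (simp add: field_simps)
  have bd4: "\<alpha> - \<sigma> \<le> pi" unfolding \<sigma>_def using th ph a by (simp add: field_simps)
  have smin: "min (sin \<sigma>^2) (sin (\<alpha> - \<sigma>)^2) = sin \<tau>^2"
  proof (cases "\<sigma> \<le> \<alpha> - \<sigma>")
    case True
    note h1 = bd1
    have h3: "\<alpha> - \<sigma> \<le> pi - \<sigma>" using a(2) by simp
    have "sin \<sigma> \<le> sin (\<alpha> - \<sigma>)" by (rule sin_le_lemma[OF h1 True h3])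
    moreover have "0 \<le> sin \<sigma>" by (rule sin_ge_zero[OF bd1 bd2])
    ultimately have "sin \<sigma>^2 \<le> sin (\<alpha> - \<sigma>)^2" by (intro power_mono)
    thus ?thesis using True unfolding \<tau>_def by simp
  next
    case False
    note h1 = bd3
    have h2: "\<alpha> - \<sigma> \<le> \<sigma>" using False by simp
    have h3: "\<sigma> \<le> pi - (\<alpha> - \<sigma>)" using a(2) by simp
    have "sin (\<alpha> - \<sigma>) \<le> sin \<sigma>" by (rule sin_le_lemma[OF h1 h2 h3])
    moreover have "0 \<le> sin (\<alpha> - \<sigma>)" by (rule sin_ge_zero[OF bd3 bd4])
    ultimately have "sin (\<alpha> - \<sigma>)^2 \<le> sin \<sigma>^2" by (intro power_mono)
    thus ?thesis using False unfolding \<tau>_def by simp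
  qed
  have "dist x y^2 + 4 * min (Im x * Im y) (Im (sg \<alpha> x) * Im (sg \<alpha> y))
      = dist x y^2 + 4 * r * s * min (sin \<theta> * sin \<phi>) (sin (\<alpha> - \<theta>) * sin (\<alpha> - \<phi>))"
    unfolding Ix Iy using rs by (simp add: min_def algebra_simps)
  also have "\<dots> = dist x y^2 + 4 * r * s * (min (sin \<sigma>^2) (sin (\<alpha> - \<sigma>)^2) - sin b^2)"
    unfolding P Q by (simp add: min_diff_distrib_left[symmetric] min_def)
  also have "\<dots> = 4 * r * s * (A + sin \<tau>^2)" unfolding smin D by (simp add: algebra_simps)
  finally have Den: "dist x y^2 + 4 * min (Im x * Im y) (Im (sg \<alpha> x) * Im (sg \<alpha> y)) = 4 * r * s * (A + sin \<tau>^2)" .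
  have dxy: "dist x y = sqrt (4 * r * s * (A + sin b^2))" using D by (metis sqrt_dist_eq zero_le_dist)
  have sb: "sin b^2 = sin (\<bar>\<theta> - \<phi>\<bar>/2)^2"
  proof (cases "\<theta> \<le> \<phi>")
    case True
    hence "\<bar>\<theta> - \<phi>\<bar>/2 = - b" unfolding b_def by (simp add: field_simps)
    thus ?thesis by simp
  next
    case False
    hence "\<bar>\<theta> - \<phi>\<bar>/2 = b" unfolding b_def by (simp add: field_simps)
    thus ?thesis by simp
  qed
  have "w_metric (sector \<alpha>) x y = sqrt (4 * r * s * (A + sin b^2)) / sqrt (4 * r * s * (A + sin \<tau>^2))"
    unfolding w_S[OF a xS yS] Den unfolding dxy ..
  also have "\<dots> = sqrt ((A + sin b^2) / (A + sin \<tau>^2))"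
    using rs by (simp add: real_sqrt_mult real_sqrt_divide)
  finally show ?thesis unfolding x_def y_def A_def sb \<tau>_def \<sigma>_def .
qed

lemma powmap_polar: fixes r t :: real assumes "0 < r" "-pi < t" "t \<le> pi"
  shows "powmap \<alpha> \<beta> (of_real r * cis t) = of_real (r powr (\<beta>/\<alpha>)) * cis ((\<beta>/\<alpha>) * t)"
proof -
  define w where "w = complex_of_real (ln r) + \<i> * complex_of_real t"
  have z: "of_real r * cis t = exp w" unfolding w_def
    using assms by (simp add: exp_add exp_of_real cis_conv_exp)
  have lnz: "ln (exp w) = w" using assms unfolding w_def by (intro Ln_exp) auto
  have "powmap \<alpha> \<beta> (of_real r * cis t) = exp (complex_of_real (\<beta>/\<alpha>) * w)"
    unfolding powmap_def z using lnz by (simp add: powr_def)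
  also have "complex_of_real (\<beta>/\<alpha>) * w = of_real ((\<beta>/\<alpha>) * ln r) + \<i> * of_real ((\<beta>/\<alpha>) * t)"
    unfolding w_def by (simp add: algebra_simps)
  also have "exp \<dots> = of_real (exp ((\<beta>/\<alpha>) * ln r)) * cis ((\<beta>/\<alpha>) * t)"
    by (simp only: exp_add exp_of_real cis_conv_exp)
  also have "exp ((\<beta>/\<alpha>) * ln r) = r powr (\<beta>/\<alpha>)" using assms by (simp add: powr_def)
  finally show ?thesis .
qed


lemma sinh_ge_self: fixes x :: real assumes "0 \<le> x" shows "x \<le> sinh x"
proof -
  have "(\<lambda>x. sinh x - x) 0 \<le> (\<lambda>x. sinh x - x) x"
  proof (rule DERIV_nonneg_imp_nondecreasing[OF assms])
    fix u assume u: "0 \<le> u" "u \<le> x"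
    have D: "((\<lambda>x. sinh x - x) has_real_derivative (cosh u - 1)) (at u)"
      by (auto intro!: derivative_eq_intros)
    moreover have "0 \<le> cosh u - 1" using cosh_real_ge_1[of u] by linarith
    ultimately show "\<exists>y. ((\<lambda>x. sinh x - x) has_real_derivative y) (at u) \<and> 0 \<le> y" by blast
  qed
  thus ?thesis by simp
qed

lemma F2sq: fixes k m :: real assumes "k \<ge> 1" shows "k^2 * sinh m^2 \<le> sinh (k*m)^2"
proof -
  have main: "k^2 * sinh m^2 \<le> sinh (k*m)^2" if m: "0 \<le> m" for m
  proof -
    have "0 \<le> k * sinh m" using assms m by simp
    hence "(k * sinh m)^2 \<le> sinh (k*m)^2" using F2[OF assms m] by (intro power_mono)
    thus ?thesis by (simp add: power_mult_distrib)
  qed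
  show ?thesis
  proof (cases "0 \<le> m")
    case True then show ?thesis by (rule main)
  next
    case False
    then show ?thesis using main[of "-m"] by simp
  qed
qed

lemma min_scale: fixes k X Y :: real assumes "0 < k" shows "min (k*X) (k*Y) = k * min X Y"
  using assms by (auto simp: min_def mult_le_cancel_left_pos)

lemma frac_le: fixes n1 n2 d1 d2 :: real assumes "0 < d1" "0 < d2" "n1 * d2 \<le> n2 * d1"
  shows "n1 / d1 \<le> n2 / d2"
  using assms by (simp add: field_simps)

lemma polar_of_sector: assumes "x \<in> sector \<alpha>"
  obtains r t where "0 < r" "0 < t" "t < \<alpha>" "x = of_real r * cis t"
proof -
  from assms obtain t where "x \<noteq> 0" "0 < t" "t < \<alpha>" "x = of_real (cmod x) * cis t"
    by (auto simp: sector_def)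
  then show ?thesis using that[of "cmod x" t] by auto
qed

lemma pair: fixes \<alpha> \<beta> r s \<theta> \<phi> :: real
  assumes a: "0 < \<alpha>" "\<alpha> \<le> \<beta>" "\<beta> \<le> pi" and rs: "0 < r" "0 < s"
    and th: "0 < \<theta>" "\<theta> < \<alpha>" and ph: "0 < \<phi>" "\<phi> < \<alpha>"
  shows "w_metric (sector \<beta>) (powmap \<alpha> \<beta> (of_real r * cis \<theta>)) (powmap \<alpha> \<beta> (of_real s * cis \<phi>)) =
    sqrt ((sinh ((\<beta>/\<alpha>) * (ln (s/r)/2))^2 + sin ((\<beta>/\<alpha>) * (\<bar>\<theta> - \<phi>\<bar>/2))^2) /
          (sinh ((\<beta>/\<alpha>) * (ln (s/r)/2))^2 + sin ((\<beta>/\<alpha>) * min ((\<theta>+\<phi>)/2) (\<alpha> - (\<theta>+\<phi>)/2))^2))"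
proof -
  define k where "k = \<beta>/\<alpha>"
  have k0: "0 < k" using a unfolding k_def by simp
  have bk: "\<beta> = k * \<alpha>" unfolding k_def using a by simp
  have tp: "-pi < \<theta>" "\<theta> \<le> pi" "-pi < \<phi>" "\<phi> \<le> pi" using th ph a by linarith+
  have f1: "powmap \<alpha> \<beta> (of_real r * cis \<theta>) = of_real (r powr k) * cis (k*\<theta>)"
    unfolding k_def using powmap_polar[OF rs(1) tp(1,2)] .
  have f2: "powmap \<alpha> \<beta> (of_real s * cis \<phi>) = of_real (s powr k) * cis (k*\<phi>)"
    unfolding k_def using powmap_polar[OF rs(2) tp(3,4)] .
  have kth: "0 < k*\<theta>" "k*\<theta> < \<beta>" "0 < k*\<phi>" "k*\<phi> < \<beta>" using k0 th ph unfolding bk by simp_all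
  have W: "w_metric (sector \<beta>) (of_real (r powr k) * cis (k*\<theta>)) (of_real (s powr k) * cis (k*\<phi>)) =
    sqrt ((sinh (ln (s powr k / r powr k)/2)^2 + sin (\<bar>k*\<theta> - k*\<phi>\<bar>/2)^2) /
          (sinh (ln (s powr k / r powr k)/2)^2 + sin (min ((k*\<theta>+k*\<phi>)/2) (\<beta> - (k*\<theta>+k*\<phi>)/2))^2))"
    using a rs kth by (intro w_polar) auto
  have l: "ln (s powr k / r powr k)/2 = k * (ln (s/r)/2)"
    using rs by (simp add: ln_div algebra_simps)
  have r1: "\<bar>k*\<theta> - k*\<phi>\<bar>/2 = k * (\<bar>\<theta> - \<phi>\<bar>/2)"
    using k0 by (simp add: right_diff_distrib[symmetric] abs_mult)
  have r2: "min ((k*\<theta>+k*\<phi>)/2) (\<beta> - (k*\<theta>+k*\<phi>)/2) = k * min ((\<theta>+\<phi>)/2) (\<alpha> - (\<theta>+\<phi>)/2)"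
  proof -
    have h1: "(k*\<theta>+k*\<phi>)/2 = k * ((\<theta>+\<phi>)/2)" by (simp add: algebra_simps)
    have h2: "\<beta> - k * ((\<theta>+\<phi>)/2) = k * (\<alpha> - (\<theta>+\<phi>)/2)" unfolding bk by (simp add: algebra_simps)
    show ?thesis unfolding h1 h2 by (rule min_scale[OF k0])
  qed
  show ?thesis using W unfolding l r1 r2 f1[symmetric] f2[symmetric] unfolding k_def .
qed

lemma frac_less: fixes n1 n2 d1 d2 :: real assumes "0 < d1" "0 < d2" "n1 * d2 < n2 * d1"
  shows "n1 / d1 < n2 / d2"
  using assms by (simp add: field_simps)

lemma ineqs: fixes k \<alpha> m \<rho> \<tau> :: real
  assumes k: "k \<ge> 1" and a: "0 < \<alpha>" "k*\<alpha> \<le> pi" and r: "0 \<le> \<rho>" "\<rho> \<le> \<tau>" "0 < \<tau>" "\<tau> \<le> \<alpha>/2"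
  shows "(sinh m^2 + sin \<rho>^2)/(sinh m^2 + sin \<tau>^2) \<le> (sinh (k*m)^2 + sin (k*\<rho>)^2)/(sinh (k*m)^2 + sin (k*\<tau>)^2)"
    and "(sinh (k*m)^2 + sin (k*\<rho>)^2)/(sinh (k*m)^2 + sin (k*\<tau>)^2)
         \<le> (k * sin (\<alpha>/2) / sin (k*(\<alpha>/2)))^2 * ((sinh m^2 + sin \<rho>^2)/(sinh m^2 + sin \<tau>^2))"
proof -
  define A where "A = sinh m^2"
  define A' where "A' = sinh (k*m)^2"
  have k0: "0 < k" using k by simp
  have "k*\<tau> \<le> k*(\<alpha>/2)" using r k0 by (intro mult_left_mono) auto
  moreover have "k*(\<alpha>/2) = (k*\<alpha>)/2" by simp
  ultimately have kt: "k*\<tau> \<le> pi/2" using a by (simp add: field_simps)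
  have kc: "k*(\<alpha>/2) \<le> pi/2" using a by (simp add: field_simps)
  have A0: "0 \<le> A" unfolding A_def by simp
  have AA: "k^2*A \<le> A'" unfolding A_def A'_def by (rule F2sq[OF k])
  have LR: "3*(A' - k^2*A) \<le> (k^2-1)*A*A'" unfolding A_def A'_def using L_R[OF k, of m] by simp
  have Az: "A' = 0" if "A = 0" using that unfolding A_def A'_def by simp
  have ap: "\<alpha> \<le> pi" using kmono[OF k, of \<alpha>] a by linarith
  have t2: "2*\<tau> \<le> \<alpha>" using r(4) by (simp add: field_simps)
  have tp: "\<tau> < pi" using t2 r(3) ap by linarith
  have st: "sin \<tau> > 0" using r tp by (intro sin_gt_zero) auto
  have ktp1: "0 < k*\<tau>" using k0 r(3) by simp
  have ktp2: "k*\<tau> < pi" using kt pi_gt_zero by linarith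
  note ktp = ktp1 ktp2
  have skt: "sin (k*\<tau>) > 0" using ktp by (intro sin_gt_zero) auto
  have d1: "0 < A + sin \<tau>^2" using A0 st by (simp add: add_nonneg_pos)
  have d2: "0 < A' + sin (k*\<tau>)^2" using A0 AA skt
    by (metis add_nonneg_pos le_add_same_cancel2 order.trans zero_less_power2 less_imp_le mult_nonneg_nonneg zero_le_power2 power2_less_0 not_less less_le)
  have cl: "(A + sin \<rho>^2) * (A' + sin (k*\<tau>)^2) \<le> (A' + sin (k*\<rho>)^2) * (A + sin \<tau>^2)"
    by (rule core_low[OF k r(1,2) kt A0 AA])
  show "(sinh m^2 + sin \<rho>^2)/(sinh m^2 + sin \<tau>^2) \<le> (sinh (k*m)^2 + sin (k*\<rho>)^2)/(sinh (k*m)^2 + sin (k*\<tau>)^2)"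
    using frac_le[OF d1 d2 cl] unfolding A_def A'_def .
  have c0: "0 < \<alpha>/2" using a by simp
  have cu: "sin (k*(\<alpha>/2))^2 * ((A' + sin (k*\<rho>)^2) * (A + sin \<tau>^2))
         \<le> k^2 * sin (\<alpha>/2)^2 * ((A + sin \<rho>^2) * (A' + sin (k*\<tau>)^2))"
    by (rule core_up[OF k c0 kc r(1,2) r(4) A0 AA LR Az])
  have kap1: "0 < k*(\<alpha>/2)" using k0 a by simp
  have kap2: "k*(\<alpha>/2) < pi" using kc pi_gt_zero by linarith
  note kap = kap1 kap2
  have sa: "sin (k*(\<alpha>/2)) > 0" using kap by (intro sin_gt_zero) auto
  have "(A' + sin (k*\<rho>)^2)/(A' + sin (k*\<tau>)^2)
        \<le> (k^2 * sin (\<alpha>/2)^2 * (A + sin \<rho>^2)) / (sin (k*(\<alpha>/2))^2 * (A + sin \<tau>^2))"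
  proof (rule frac_le[OF d2])
    show "0 < sin (k*(\<alpha>/2))^2 * (A + sin \<tau>^2)" using sa d1 by simp
    show "(A' + sin (k*\<rho>)^2) * (sin (k*(\<alpha>/2))^2 * (A + sin \<tau>^2))
          \<le> k^2 * sin (\<alpha>/2)^2 * (A + sin \<rho>^2) * (A' + sin (k*\<tau>)^2)"
      using cu by (simp add: algebra_simps)
  qed
  also have "\<dots> = (k * sin (\<alpha>/2) / sin (k*(\<alpha>/2)))^2 * ((A + sin \<rho>^2)/(A + sin \<tau>^2))"
    using sa d1 by (simp add: field_simps power2_eq_square)
  finally show "(sinh (k*m)^2 + sin (k*\<rho>)^2)/(sinh (k*m)^2 + sin (k*\<tau>)^2)
         \<le> (k * sin (\<alpha>/2) / sin (k*(\<alpha>/2)))^2 * ((sinh m^2 + sin \<rho>^2)/(sinh m^2 + sin \<tau>^2))"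
    unfolding A_def A'_def .
qed


lemma polar_in_sector: fixes r t :: real assumes "0 < r" "0 < t" "t < \<alpha>"
  shows "of_real r * cis t \<in> sector \<alpha>"
proof -
  have "cmod (of_real r * cis t) = r" using assms by (simp add: norm_mult)
  thus ?thesis unfolding sector_def using assms by auto
qed

lemma frac_lt1: fixes X Y :: real assumes "0 \<le> X" "0 < Y" shows "X/(X+Y) < 1"
  using assms by (simp add: field_simps)

lemma special: fixes \<alpha> \<beta> M :: real
  assumes a: "0 < \<alpha>" "\<alpha> \<le> \<beta>" "\<beta> \<le> pi"
  shows "w_metric (sector \<alpha>) (of_real 1 * cis (\<alpha>/2)) (of_real (exp (2*M)) * cis (\<alpha>/2))
           = sqrt (sinh M^2 / (sinh M^2 + sin (\<alpha>/2)^2))"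
    and "w_metric (sector \<beta>) (powmap \<alpha> \<beta> (of_real 1 * cis (\<alpha>/2))) (powmap \<alpha> \<beta> (of_real (exp (2*M)) * cis (\<alpha>/2)))
           = sqrt (sinh ((\<beta>/\<alpha>)*M)^2 / (sinh ((\<beta>/\<alpha>)*M)^2 + sin ((\<beta>/\<alpha>)*(\<alpha>/2))^2))"
proof -
  have ap: "\<alpha> \<le> pi" using a by linarith
  have h: "0 < \<alpha>/2" "\<alpha>/2 < \<alpha>" using a by simp_all
  have l: "ln (exp (2*M) / 1) / 2 = M" by simp
  have m: "min ((\<alpha>/2 + \<alpha>/2)/2) (\<alpha> - (\<alpha>/2 + \<alpha>/2)/2) = \<alpha>/2" by simp
  show "w_metric (sector \<alpha>) (of_real 1 * cis (\<alpha>/2)) (of_real (exp (2*M)) * cis (\<alpha>/2))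
           = sqrt (sinh M^2 / (sinh M^2 + sin (\<alpha>/2)^2))"
    using w_polar[OF a(1) ap _ _ h h, of 1 "exp (2*M)"] unfolding l m by simp
  show "w_metric (sector \<beta>) (powmap \<alpha> \<beta> (of_real 1 * cis (\<alpha>/2))) (powmap \<alpha> \<beta> (of_real (exp (2*M)) * cis (\<alpha>/2)))
           = sqrt (sinh ((\<beta>/\<alpha>)*M)^2 / (sinh ((\<beta>/\<alpha>)*M)^2 + sin ((\<beta>/\<alpha>)*(\<alpha>/2))^2))"
    using pair[OF a _ _ h h, of 1 "exp (2*M)"] unfolding l m by simp
qed
theorem lemma5p8:
  fixes \<alpha> \<beta> :: real
  assumes "0 < \<alpha>" and "\<alpha> \<le> \<beta>" and "\<beta> \<le> pi"
  defines "f \<equiv> powmap \<alpha> \<beta>"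
  defines "K \<equiv> \<beta> * sin (\<alpha> / 2) / (\<alpha> * sin (\<beta> / 2))"
  shows "(\<forall>x\<in>sector \<alpha>. \<forall>y\<in>sector \<alpha>.
            w_metric (sector \<alpha>) x y \<le> w_metric (sector \<beta>) (f x) (f y) \<and>
            w_metric (sector \<beta>) (f x) (f y) \<le> K * w_metric (sector \<alpha>) x y)
       \<and> (\<forall>c>1. \<exists>x\<in>sector \<alpha>. \<exists>y\<in>sector \<alpha>.
            w_metric (sector \<beta>) (f x) (f y) < c * w_metric (sector \<alpha>) x y)
       \<and> (\<forall>c<K. \<exists>x\<in>sector \<alpha>. \<exists>y\<in>sector \<alpha>.
            c * w_metric (sector \<alpha>) x y < w_metric (sector \<beta>) (f x) (f y))"
proof -
  note a = assms(1-3)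
  define k where "k = \<beta>/\<alpha>"
  have bk: "\<beta> = k*\<alpha>" unfolding k_def using a by simp
  have k1: "1 \<le> k" unfolding k_def using a by simp
  have k0: "0 < k" using k1 by simp
  have ka: "k*\<alpha> \<le> pi" using a bk by simp
  have ap: "\<alpha> \<le> pi" using a by linarith
  have kc: "k*(\<alpha>/2) \<le> pi/2" using ka by (simp add: field_simps)
  have sa: "0 < sin (\<alpha>/2)" using a ap by (intro sin_gt_zero) (auto simp: field_simps)
  have kap1: "0 < k*(\<alpha>/2)" using k0 a by simp
  have kap2: "k*(\<alpha>/2) < pi" using kc pi_gt_zero by linarith
  have ska: "0 < sin (k*(\<alpha>/2))" using kap1 kap2 by (intro sin_gt_zero) auto
  have Kk: "K = k * sin (\<alpha>/2) / sin (k*(\<alpha>/2))"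
  proof -
    have "\<beta>/2 = k*(\<alpha>/2)" unfolding bk by simp
    thus ?thesis unfolding K_def bk using a by (simp add: field_simps)
  qed
  have K0: "0 < K" unfolding Kk using k0 sa ska by simp
  have part1: "\<forall>x\<in>sector \<alpha>. \<forall>y\<in>sector \<alpha>.
            w_metric (sector \<alpha>) x y \<le> w_metric (sector \<beta>) (f x) (f y) \<and>
            w_metric (sector \<beta>) (f x) (f y) \<le> K * w_metric (sector \<alpha>) x y"
  proof (intro ballI)
    fix x y assume x: "x \<in> sector \<alpha>" and y: "y \<in> sector \<alpha>"
    obtain r \<theta> where r: "0 < r" "0 < \<theta>" "\<theta> < \<alpha>" "x = of_real r * cis \<theta>" using polar_of_sector[OF x] by blast
    obtain s \<phi> where s: "0 < s" "0 < \<phi>" "\<phi> < \<alpha>" "y = of_real s * cis \<phi>" using polar_of_sector[OF y] by blast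
    define m where "m = ln (s/r)/2"
    define \<rho> where "\<rho> = \<bar>\<theta> - \<phi>\<bar>/2"
    define \<tau> where "\<tau> = min ((\<theta>+\<phi>)/2) (\<alpha> - (\<theta>+\<phi>)/2)"
    have w1: "w_metric (sector \<alpha>) x y = sqrt ((sinh m^2 + sin \<rho>^2)/(sinh m^2 + sin \<tau>^2))"
      unfolding r(4) s(4) m_def \<rho>_def \<tau>_def using w_polar[OF a(1) ap r(1) s(1) r(2,3) s(2,3)] .
    have w2: "w_metric (sector \<beta>) (f x) (f y) = sqrt ((sinh (k*m)^2 + sin (k*\<rho>)^2)/(sinh (k*m)^2 + sin (k*\<tau>)^2))"
      unfolding r(4) s(4) m_def \<rho>_def \<tau>_def k_def f_def using pair[OF a r(1) s(1) r(2,3) s(2,3)] .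
    have c1: "0 \<le> \<rho>" unfolding \<rho>_def by simp
    have c2: "\<rho> \<le> \<tau>" unfolding \<rho>_def \<tau>_def using r s by (auto simp: min_def abs_if field_simps)
    have c3: "0 < \<tau>" unfolding \<tau>_def using r s by (auto simp: min_def field_simps)
    have c4: "\<tau> \<le> \<alpha>/2" unfolding \<tau>_def by (auto simp: min_def field_simps)
    note I = ineqs[OF k1 a(1) ka c1 c2 c3 c4, of m]
    have "w_metric (sector \<alpha>) x y \<le> w_metric (sector \<beta>) (f x) (f y)"
      unfolding w1 w2 using I(1) by (rule real_sqrt_le_mono)
    moreover have "w_metric (sector \<beta>) (f x) (f y) \<le> K * w_metric (sector \<alpha>) x y"
    proof -
      have "w_metric (sector \<beta>) (f x) (f y) \<le> sqrt (K^2 * ((sinh m^2 + sin \<rho>^2)/(sinh m^2 + sin \<tau>^2)))"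
        unfolding w2 Kk using I(2) by (rule real_sqrt_le_mono)
      also have "\<dots> = K * w_metric (sector \<alpha>) x y" unfolding w1 real_sqrt_mult using K0 by simp
      finally show ?thesis .
    qed
    ultimately show "w_metric (sector \<alpha>) x y \<le> w_metric (sector \<beta>) (f x) (f y) \<and>
            w_metric (sector \<beta>) (f x) (f y) \<le> K * w_metric (sector \<alpha>) x y" by blast
  qed
  define x0 where "x0 = of_real 1 * cis (\<alpha>/2)"
  define y0 where "y0 = (\<lambda>M::real. of_real (exp (2*M)) * cis (\<alpha>/2))"
  have x0S: "x0 \<in> sector \<alpha>"
    unfolding x0_def using a by (intro polar_in_sector) auto
  have y0S: "y0 M \<in> sector \<alpha>" for M
    unfolding y0_def using a by (intro polar_in_sector) auto
  have W1: "\<And>M. w_metric (sector \<alpha>) x0 (y0 M) = sqrt (sinh M^2 / (sinh M^2 + sin (\<alpha>/2)^2))"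
    unfolding x0_def y0_def using special(1)[OF a] .
  have W2: "\<And>M. w_metric (sector \<beta>) (f x0) (f (y0 M)) = sqrt (sinh (k*M)^2 / (sinh (k*M)^2 + sin (k*(\<alpha>/2))^2))"
    unfolding x0_def y0_def f_def k_def using special(2)[OF a] .
  have W2lt: "w_metric (sector \<beta>) (f x0) (f (y0 M)) < 1" for M
  proof -
    have "0 < sin (k*(\<alpha>/2))^2" using ska by simp
    hence "sinh (k*M)^2 / (sinh (k*M)^2 + sin (k*(\<alpha>/2))^2) < 1" by (intro frac_lt1) auto
    thus ?thesis unfolding W2 by simp
  qed
  have part2: "\<forall>c>1. \<exists>x\<in>sector \<alpha>. \<exists>y\<in>sector \<alpha>.
            w_metric (sector \<beta>) (f x) (f y) < c * w_metric (sector \<alpha>) x y"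
  proof (intro allI impI)
    fix c :: real assume c: "c > 1"
    have cc: "0 < c^2 - 1" using c by (simp add: power2_eq_square) (metis less_1_mult c)
    define M where "M = 1/(c^2 - 1) + 1"
    have M1: "1 \<le> M" "0 \<le> M" unfolding M_def using cc by simp_all
    have "M \<le> sinh M" by (rule sinh_ge_self[OF M1(2)])
    hence "M * 1 \<le> sinh M * sinh M" using M1 by (intro mult_mono) auto
    hence AM: "M \<le> sinh M^2" by (simp add: power2_eq_square)
    have "(c^2 - 1) * M = 1 + (c^2 - 1)" unfolding M_def using cc by (simp add: distrib_left)
    hence "1 < (c^2 - 1) * M" using cc by linarith
    also have "\<dots> \<le> (c^2 - 1) * sinh M^2" using AM cc by (intro mult_left_mono) auto
    finally have h: "1 < (c^2 - 1) * sinh M^2" .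
    have b1: "sin (\<alpha>/2)^2 \<le> 1" using sin_cos_squared_add[of "\<alpha>/2"] zero_le_power2[of "cos (\<alpha>/2)"] by linarith
    have Ap: "0 < sinh M^2" using AM M1 by linarith
    have "1 < c^2 * (sinh M^2 / (sinh M^2 + sin (\<alpha>/2)^2))"
      using h b1 Ap by (simp add: field_simps add_pos_nonneg)
    hence s1: "1 < sqrt (c^2 * (sinh M^2 / (sinh M^2 + sin (\<alpha>/2)^2)))" by simp
    have eq: "sqrt (c^2 * (sinh M^2 / (sinh M^2 + sin (\<alpha>/2)^2))) = c * sqrt (sinh M^2 / (sinh M^2 + sin (\<alpha>/2)^2))"
      unfolding real_sqrt_mult using c by simp
    have "1 < c * w_metric (sector \<alpha>) x0 (y0 M)" unfolding W1 using s1 unfolding eq .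
    with W2lt[of M] have "w_metric (sector \<beta>) (f x0) (f (y0 M)) < c * w_metric (sector \<alpha>) x0 (y0 M)" by linarith
    thus "\<exists>x\<in>sector \<alpha>. \<exists>y\<in>sector \<alpha>. w_metric (sector \<beta>) (f x) (f y) < c * w_metric (sector \<alpha>) x y"
      using x0S y0S by blast
  qed
  have part3: "\<forall>c<K. \<exists>x\<in>sector \<alpha>. \<exists>y\<in>sector \<alpha>.
            c * w_metric (sector \<alpha>) x y < w_metric (sector \<beta>) (f x) (f y)"
  proof (intro allI impI)
    fix c assume cK: "c < K"
    show "\<exists>x\<in>sector \<alpha>. \<exists>y\<in>sector \<alpha>. c * w_metric (sector \<alpha>) x y < w_metric (sector \<beta>) (f x) (f y)"
    proof (cases "c \<le> 0")
      case True
      have p: "0 < sinh (k*1)^2" using k0 by simp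
      have q: "0 < sin (k*(\<alpha>/2))^2" using ska by simp
      have "0 < sinh (k*1)^2 / (sinh (k*1)^2 + sin (k*(\<alpha>/2))^2)" using p q by (intro divide_pos_pos add_pos_pos)
      hence "0 < w_metric (sector \<beta>) (f x0) (f (y0 1))" unfolding W2 by simp
      moreover have "c * w_metric (sector \<alpha>) x0 (y0 1) \<le> 0" unfolding W1 using True
        by (simp add: mult_nonpos_nonneg)
      ultimately show ?thesis using x0S y0S by (meson le_less_trans)
    next
      case False
      hence c0: "0 < c" by simp
      define a2 where "a2 = sin (k*(\<alpha>/2))^2"
      define b2 where "b2 = sin (\<alpha>/2)^2"
      have a20: "0 < a2" unfolding a2_def using ska by simp
      have b20: "0 < b2" unfolding b2_def using sa by simp
      have "c^2 < K^2" using c0 cK by (intro power_strict_mono) auto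
      also have "K^2 = k^2 * b2 / a2" unfolding Kk a2_def b2_def by (simp add: power_divide power_mult_distrib)
      finally have "c^2 * a2 < k^2 * b2" using a20 by (simp add: field_simps)
      hence dpos: "0 < k^2 * b2 / c^2 - a2" using c0 by (simp add: field_simps)
      define \<delta> where "\<delta> = k^2 * b2 / c^2 - a2"
      have "isCont (\<lambda>u. sinh (k*u)^2) 0" by (intro continuous_intros)
      hence "(\<lambda>u. sinh (k*u)^2) \<midarrow>0\<rightarrow> 0" unfolding isCont_def by simp
      from LIM_D[OF this dpos[folded \<delta>_def]] obtain t where t: "t > 0"
        "\<And>u. u \<noteq> 0 \<and> norm (u - 0) < t \<longrightarrow> norm (sinh (k*u)^2 - 0) < \<delta>" by blast
      define M where "M = t/2"
      have M0: "0 < M" unfolding M_def using t by simp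
      have Ad: "sinh (k*M)^2 < \<delta>" using t(2)[of M] M0 unfolding M_def using t by simp
      define A where "A = sinh M^2"
      define A' where "A' = sinh (k*M)^2"
      have A0: "0 < A" unfolding A_def using M0 by simp
      have AA: "k^2 * A \<le> A'" unfolding A_def A'_def by (rule F2sq[OF k1])
      have A'0: "0 < A'" unfolding A'_def using M0 k0 by simp
      have "c^2 * (A' + a2) < k^2 * b2" using Ad c0 unfolding A'_def \<delta>_def by (simp add: field_simps)
      have key: "c^2 * A * (A' + a2) < A' * (A + b2)"
      proof -
        have "c^2 * A * (A' + a2) * k^2 = (c^2 * (A' + a2)) * (k^2 * A)" by (simp add: algebra_simps)
        also have "\<dots> \<le> (c^2 * (A' + a2)) * A'" using AA a20 A'0 by (intro mult_left_mono) auto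
        also have "\<dots> < (k^2 * b2) * A'" using \<open>c^2 * (A' + a2) < k^2 * b2\<close> A'0 by simp
        also have "\<dots> \<le> (A' * (A + b2)) * k^2" using A0 A'0 b20 by (simp add: algebra_simps)
        finally show ?thesis using k0 by simp
      qed
      have "c^2 * (A / (A + b2)) < A' / (A' + a2)"
      proof -
        have "c^2 * (A / (A + b2)) = (c^2 * A) / (A + b2)" by simp
        also have "\<dots> < A' / (A' + a2)" using key A0 A'0 a20 b20 by (intro frac_less) (auto simp: algebra_simps)
        finally show ?thesis .
      qed
      hence s1: "sqrt (c^2 * (A / (A + b2))) < sqrt (A' / (A' + a2))" by simp
      have eq: "sqrt (c^2 * (A / (A + b2))) = c * sqrt (A / (A + b2))"
        unfolding real_sqrt_mult using c0 by simp
      have "c * w_metric (sector \<alpha>) x0 (y0 M) < w_metric (sector \<beta>) (f x0) (f (y0 M))"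
        unfolding W1 W2 using s1 unfolding eq unfolding A_def A'_def a2_def b2_def .
      thus ?thesis using x0S y0S by blast
    qed
  qed
  show ?thesis using part1 part2 part3 by blast
qed

end
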